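(* Let $n \ge 2$ be an integer and let $\underline{x}_1,\bar{x}_1,\underline{x}_2,\bar{x}_2 \in \mathbb{R}$ with $1 \le \underline{x}_i < \bar{x}_i$ for $i \in \{1,2\}$. For every $(x_1,x_2) \in [\underline{x}_1,\bar{x}_1] \times [\underline{x}_2,\bar{x}_2]$, every point $y \in \mathbb{R}^{n+2}$ that is feasible for the lower-level problem $$\max_{y \in \mathbb{R}^{n+2}} \; y_1 - y_n\,(x_1 + x_2 - y_{n+1} - y_{n+2})$$ subject to $y_1 + y_n = \tfrac12$, $y_i^2 \le y_{i+1}$ for $i \in \{1,\dots,n-1\}$, $y_i \ge 0$ for $i \in \{1,\dots,n\}$, $y_{n+1} \in [0,x_1]$, $y_{n+2} \in [-x_2,x_2]$, satisfies $y_n > 0$.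
   Context: This lower-level problem is the follower's problem of a bilevel problem whose leader chooses $x=(x_1,x_2)$ in the box $[\underline{x}_1,\bar{x}_1] \times [\underline{x}_2,\bar{x}_2]$. *)

theory Defs
  imports Complex_Main
begin

text \<open>Points of R^(n+2) are represented as functions y :: nat => real, using only the
  components y 1, ..., y (n+2) (1-based indexing as in the paper).\<close>

definition lower_feasible :: "nat \<Rightarrow> real \<Rightarrow> real \<Rightarrow> (nat \<Rightarrow> real) \<Rightarrow> bool" where
  "lower_feasible n x1 x2 y \<longleftrightarrow>
     y 1 + y n = 1/2
   \<and> (\<forall>i\<in>{1..n-1}. (y i)^2 \<le> y (i+1))
   \<and> (\<forall>i\<in>{1..n}. y i \<ge> 0)
   \<and> 0 \<le> y (n+1) \<and> y (n+1) \<le> x1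
   \<and> - x2 \<le> y (n+2) \<and> y (n+2) \<le> x2"

definition lower_objective :: "nat \<Rightarrow> real \<Rightarrow> real \<Rightarrow> (nat \<Rightarrow> real) \<Rightarrow> real" where
  "lower_objective n x1 x2 y = y 1 - y n * (x1 + x2 - y (n+1) - y (n+2))"

end

theory Submission
  imports Defs
begin

lemma pos_chain:
  fixes y :: "nat \<Rightarrow> real"
  assumes "y 1 > 0" and "\<forall>i\<in>{1..n-1}. (y i)^2 \<le> y (i+1)"
  shows "1 \<le> k \<Longrightarrow> k \<le> n \<Longrightarrow> y k > 0"
proof (induction k)
  case 0 then show ?case by simp
next
  case (Suc k)
  show ?case
  proof (cases "k = 0")
    case True then show ?thesis using assms(1) by simp
  next
    case False
    then have "y k > 0" using Suc by simp
    moreover have "(y k)^2 \<le> y (k+1)" using assms(2) False Suc.prems by auto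
    moreover have "(y k)^2 > 0" using calculation by simp
    ultimately show ?thesis by (metis Suc_eq_plus1 less_le_trans)
  qed
qed

theorem mainTheorem1:
  fixes n :: nat and xl1 xu1 xl2 xu2 x1 x2 :: real and y :: "nat \<Rightarrow> real"
  assumes "n \<ge> 2"
    and "1 \<le> xl1" and "xl1 < xu1" and "1 \<le> xl2" and "xl2 < xu2"
    and "x1 \<in> {xl1..xu1}" and "x2 \<in> {xl2..xu2}"
    and "lower_feasible n x1 x2 y"
  shows "y n > 0"
proof (rule ccontr)
  assume h: "\<not> y n > 0"
  have f: "y 1 + y n = 1/2" "\<forall>i\<in>{1..n-1}. (y i)^2 \<le> y (i+1)" "\<forall>i\<in>{1..n}. y i \<ge> 0"
    using assms(8) unfolding lower_feasible_def by auto
  have "y n \<ge> 0" using f(3) assms(1) by auto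
  then have "y n = 0" using h by simp
  then have "y 1 > 0" using f(1) by simp
  then have "y n > 0" using pos_chain[OF _ f(2), of n] assms(1) by simp
  then show False using h by simp
qed

end
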